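(* Let $n\ge2$ and let $\mathsf r$ be a cyclic factorization of $\lambda_n$. Then there exists $\mathsf u\in\mathcal S_n$ such that $\mathsf r=\mathsf r^{\mathsf u}$.
   Context: $\widetilde S_n$ is the group, under composition $(vw)(k)=v(w(k))$, of bijections $w:\mathbb Z\to\mathbb Z$ with $w(i+n)=w(i)+n$ and $\sum_{i=1}^n w(i)=\binom{n+1}2$. For $i\not\equiv j\pmod n$, $(\!(i,j)\!)$ swaps $i+kn$ and $j+kn$ for all $k$; $(\!(i,j)\!)=(\!(j,i)\!)=(\!(i+kn,j+kn)\!)$; $s_i=(\!(i,i+1)\!)$, $i\in\{0,\dots,n-1\}$. "$i\bmod n$" is the representative in $\{1,\dots,n\}$. $\lambda_n(k)=k+n$ for $k\not\equiv0\pmod n$, $\lambda_n(k)=k-n(n-1)$ for $k\equiv0\pmod n$; its reflection length is $2n-2$; $\textsc{fact}(\lambda_n)$ is the set of sequences of $2n-2$ reflections with product $\lambda_n$. Such $[r_1,\dots,r_{2n-2}]$ is tree-like if one can write $r_i=(\!(a_{i-1},b_i)\!)$ with integers $a_{i-1}<b_i$ and $a_i\equiv b_i\pmod n$ ($1\le i\le 2n-3$). For $k\in[n]$, $N_{\mathsf r}(k)$ is the list, in increasing order of $i$, of $b_i\bmod n$ over all $i$ with $a_{i-1}\equiv k\pmod n$. A tree-like $\mathsf r$ is cyclic if (i) $N_{\mathsf r}(n)$ is strictly increasing and (ii) for each $1\le k<n$, writing $N_{\mathsf r}(k)=[c_1,\dots,c_\ell]$, there is $1\le j\le \ell$ with $c_j<\dots<c_{\ell-1}<k<c_1<\dots<c_{j-1}$.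 $\bm\lambda_n$ is the word $[s_0,\dots,s_{n-1}]$ repeated $n-1$ times with $j$-th letter $\sigma_j=s_{(j-1)\bmod n}$ (index in $\{0,\dots,n-1\}$). A subword is $\mathsf u=[u_1,\dots,u_{n(n-1)}]$ with $u_j\in\{\sigma_j,e\}$; $j$ is a skip if $u_j=e$. $u_{(j)}=u_1\cdots u_j$, $u_{(0)}=e$. $\mathcal S_n$ is the set of subwords with exactly $2n-2$ skips and product $e$. $\textsc{inv}(\mathsf u)=[t_1,\dots,t_{n(n-1)}]$, $t_j=u_{(j-1)}\sigma_ju_{(j-1)}^{-1}$; $\mathsf r^{\mathsf u}$ is the subsequence of the $t_j$ at skips, in increasing order. *)

theory Defs
  imports Main
begin

text \<open>Affine permutations are represented as functions int => int; product is
  composition, (v w)(k) = v (w k).\<close>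

definition affine_perm :: "nat \<Rightarrow> (int \<Rightarrow> int) \<Rightarrow> bool" where
  "affine_perm n w \<longleftrightarrow> bij w \<and> (\<forall>i. w (i + int n) = w i + int n)
     \<and> (\<Sum>i=1..int n. w i) = int n * (int n + 1) div 2"

text \<open>The reflection ((i,j)) (meant for i, j not congruent mod n): swaps i+kn and j+kn.\<close>
definition refl_aff :: "nat \<Rightarrow> int \<Rightarrow> int \<Rightarrow> int \<Rightarrow> int" where
  "refl_aff n i j k =
     (if k mod int n = i mod int n then k + (j - i)
      else if k mod int n = j mod int n then k + (i - j) else k)"

definition reflections :: "nat \<Rightarrow> (int \<Rightarrow> int) set" where
  "reflections n = {refl_aff n i j | i j. i mod int n \<noteq> j mod int n}"

definition simple_refl :: "nat \<Rightarrow> nat \<Rightarrow> int \<Rightarrow> int" where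
  "simple_refl n i = refl_aff n (int i) (int i + 1)"

definition lambda_aff :: "nat \<Rightarrow> int \<Rightarrow> int" where
  "lambda_aff n k = (if k mod int n \<noteq> 0 then k + int n else k - int n * (int n - 1))"

definition prod_perms :: "(int \<Rightarrow> int) list \<Rightarrow> int \<Rightarrow> int" where
  "prod_perms ws = foldr (\<circ>) ws id"

definition fact_lambda :: "nat \<Rightarrow> (int \<Rightarrow> int) list set" where
  "fact_lambda n = {rs. length rs = 2 * n - 2 \<and> set rs \<subseteq> reflections n
                        \<and> prod_perms rs = lambda_aff n}"

definition modn :: "nat \<Rightarrow> int \<Rightarrow> int" where
  "modn n k = (if k mod int n = 0 then int n else k mod int n)"

text \<open>Tree-like witness: r_i = ((a_{i-1}, b_i)) for 1 <= i <= 2n-2 with a_{i-1} < b_i,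
  and a_i == b_i (mod n) for 1 <= i <= 2n-3.  List index i-1 holds r_i.\<close>
definition tree_like_wit :: "nat \<Rightarrow> (int \<Rightarrow> int) list \<Rightarrow> (nat \<Rightarrow> int) \<Rightarrow> (nat \<Rightarrow> int) \<Rightarrow> bool" where
  "tree_like_wit n rs a b \<longleftrightarrow> length rs = 2 * n - 2 \<and>
     (\<forall>i\<in>{1..2*n-2}. a (i-1) mod int n \<noteq> b i mod int n \<and>
          rs ! (i-1) = refl_aff n (a (i-1)) (b i) \<and> a (i-1) < b i) \<and>
     (\<forall>i\<in>{1..2*n-3}. a i mod int n = b i mod int n)"

definition tree_like :: "nat \<Rightarrow> (int \<Rightarrow> int) list \<Rightarrow> bool" where
  "tree_like n rs \<longleftrightarrow> (\<exists>a b. tree_like_wit n rs a b)"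

definition nbr_list :: "nat \<Rightarrow> (nat \<Rightarrow> int) \<Rightarrow> (nat \<Rightarrow> int) \<Rightarrow> int \<Rightarrow> int list" where
  "nbr_list n a b k = map (\<lambda>i. modn n (b i)) (filter (\<lambda>i. modn n (a (i-1)) = k) [1..<2*n-1])"

text \<open>Condition (ii): N = [c_1..c_l] and some 1 <= j <= l with
  c_j < ... < c_{l-1} < k < c_1 < ... < c_{j-1}.\<close>
definition cyc_cond :: "int \<Rightarrow> int list \<Rightarrow> bool" where
  "cyc_cond k cs \<longleftrightarrow> (\<exists>j\<in>{1..length cs}.
     sorted_wrt (<) (drop (j-1) (butlast cs) @ [k] @ take (j-1) cs))"

definition cyclic_fact :: "nat \<Rightarrow> (int \<Rightarrow> int) list \<Rightarrow> bool" where
  "cyclic_fact n rs \<longleftrightarrow> (\<exists>a b. tree_like_wit n rs a b \<and>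
     sorted_wrt (<) (nbr_list n a b (int n)) \<and>
     (\<forall>k\<in>{1..<int n}. cyc_cond k (nbr_list n a b k)))"

text \<open>The word lambda_n: sigma_j = s_{(j-1) mod n}, j = 1..n(n-1).\<close>
definition sigma :: "nat \<Rightarrow> nat \<Rightarrow> int \<Rightarrow> int" where
  "sigma n j = simple_refl n ((j - 1) mod n)"

text \<open>Subwords: list u with u!(j-1) = u_j in {sigma_j, e}.\<close>
definition skips :: "nat \<Rightarrow> (int \<Rightarrow> int) list \<Rightarrow> nat list" where
  "skips n u = filter (\<lambda>j. u ! (j-1) = id) [1..<n*(n-1)+1]"

definition subwords_S :: "nat \<Rightarrow> (int \<Rightarrow> int) list set" where
  "subwords_S n = {u. length u = n * (n - 1) \<and>
       (\<forall>j\<in>{1..n*(n-1)}. u ! (j-1) = sigma n j \<or> u ! (j-1) = id) \<and>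
       length (skips n u) = 2 * n - 2 \<and> prod_perms u = id}"

definition prefix_prod :: "(int \<Rightarrow> int) list \<Rightarrow> nat \<Rightarrow> int \<Rightarrow> int" where
  "prefix_prod u j = prod_perms (take j u)"

definition inv_t :: "nat \<Rightarrow> (int \<Rightarrow> int) list \<Rightarrow> nat \<Rightarrow> int \<Rightarrow> int" where
  "inv_t n u j = prefix_prod u (j-1) \<circ> sigma n j \<circ> inv (prefix_prod u (j-1))"

definition r_of :: "nat \<Rightarrow> (int \<Rightarrow> int) list \<Rightarrow> (int \<Rightarrow> int) list" where
  "r_of n u = map (inv_t n u) (skips n u)"

end

theory Submission
  imports Defs
begin

definition per :: "nat \<Rightarrow> (int \<Rightarrow> int) \<Rightarrow> bool" where
  "per n f \<longleftrightarrow> bij f \<and> (\<forall>k. f (k + int n) = f k + int n)"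

lemma per_shift: "per n f \<Longrightarrow> f (k + t * int n) = f k + t * int n"
proof -
  assume p: "per n f"
  have fw: "f (k + int j * int n) = f k + int j * int n" for j :: nat and k
  proof (induction j arbitrary: k)
    case 0 then show ?case by simp
  next
    case (Suc j)
    have "f (k + int (Suc j) * int n) = f ((k + int j * int n) + int n)" by (simp add: algebra_simps)
    also have "\<dots> = f (k + int j * int n) + int n" using p per_def by blast
    finally show ?case using Suc by (simp add: algebra_simps)
  qed
  show ?thesis
  proof (cases "t \<ge> 0")
    case True then show ?thesis using fw[where j="nat t" and k=k] by simp
  next
    case False
    have "f (k + t * int n) + int (nat (-t)) * int n = f k"
      using fw[where j="nat (-t)" and k="k + t * int n"] False by (simp add: algebra_simps)
    then show ?thesis using False by simp
  qed
qed

lemma per_comp: "per n f \<Longrightarrow> per n g \<Longrightarrow> per n (f \<circ> g)"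
  unfolding per_def by (auto intro: bij_comp)

lemma per_id: "per n id" unfolding per_def by simp

lemma per_inv: assumes "per n f" shows "per n (inv f)"
proof -
  have b: "bij f" using assms per_def by blast
  have "inv f (k + int n) = inv f k + int n" for k
  proof -
    have "f (inv f k + int n) = k + int n" using assms b unfolding per_def
      by (simp add: bij_is_surj surj_f_inv_f)
    then show ?thesis using b by (metis bij_inv_eq_iff)
  qed
  then show ?thesis using b bij_imp_bij_inv per_def by blast
qed

lemma per_cong: assumes "per n f" "n > 0" shows "(f x mod int n = f y mod int n) \<longleftrightarrow> (x mod int n = y mod int n)"
proof
  assume "x mod int n = y mod int n"
  then obtain t where "x = y + t * int n" by (metis mod_eqE mult.commute)
  then show "f x mod int n = f y mod int n" using per_shift[OF assms(1)] by simp
next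
  assume h: "f x mod int n = f y mod int n"
  then obtain t where t: "f x = f y + t * int n" by (metis mod_eqE mult.commute)
  then have "f x = f (y + t * int n)" using per_shift[OF assms(1)] by simp
  then have "x = y + t * int n" using assms(1) unfolding per_def bij_def inj_def by blast
  then show "x mod int n = y mod int n" by simp
qed

lemma refl_aff_shift: "refl_aff n (i + t * int n) (j + t * int n) = refl_aff n i j"
  unfolding refl_aff_def by (rule ext) simp

lemma refl_aff_eq: "i mod int n \<noteq> j mod int n \<Longrightarrow> i mod int n = i' mod int n \<Longrightarrow> j - i = j' - i' \<Longrightarrow> refl_aff n i j = refl_aff n i' j'"
  unfolding refl_aff_def apply (rule ext)
  by (smt (verit, ccfv_threshold) mod_add_cong mod_diff_cong)

lemma refl_aff_invol: assumes "i mod int n \<noteq> j mod int n"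
  shows "refl_aff n i j (refl_aff n i j k) = k"
proof -
  have a: "(k + (j - i)) mod int n = j mod int n" if "k mod int n = i mod int n"
    using that by (metis add.commute diff_add_cancel mod_add_cong mod_add_left_eq)
  have b: "(k + (i - j)) mod int n = i mod int n" if "k mod int n = j mod int n"
    using that by (metis add.commute diff_add_cancel mod_add_cong mod_add_left_eq)
  show ?thesis unfolding refl_aff_def using a b assms by auto
qed

lemma refl_aff_per: assumes "i mod int n \<noteq> j mod int n" shows "per n (refl_aff n i j)"
proof -
  have "bij (refl_aff n i j)"
    by (rule o_bij[of "refl_aff n i j"]) (auto simp: refl_aff_invol[OF assms] fun_eq_iff)
  moreover have "refl_aff n i j (k + int n) = refl_aff n i j k + int n" for k
    unfolding refl_aff_def by simp
  ultimately show ?thesis unfolding per_def by blast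
qed

lemma refl_aff_comm: "i mod int n \<noteq> j mod int n \<Longrightarrow> refl_aff n i j = refl_aff n j i"
  unfolding refl_aff_def by (rule ext) auto

lemma refl_aff_at_i: "refl_aff n i j i = j"
  unfolding refl_aff_def by simp
lemma refl_aff_at_j: "i mod int n \<noteq> j mod int n \<Longrightarrow> refl_aff n i j j = i"
  unfolding refl_aff_def by simp
lemma refl_aff_other: "k mod int n \<noteq> i mod int n \<Longrightarrow> k mod int n \<noteq> j mod int n \<Longrightarrow> refl_aff n i j k = k"
  unfolding refl_aff_def by simp

lemma conj_refl: assumes g: "per n g" and n: "n > 0" and ij: "i mod int n \<noteq> j mod int n"
  shows "g \<circ> refl_aff n i j \<circ> inv g = refl_aff n (g i) (g j)"
proof (rule ext)
  fix k
  have b: "bij g" using g per_def by blast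
  define k' where "k' = inv g k"
  have kk: "g k' = k" using b k'_def by (simp add: bij_inv_eq_iff)
  have gij: "g i mod int n \<noteq> g j mod int n" using per_cong[OF g n] ij by blast
  show "(g \<circ> refl_aff n i j \<circ> inv g) k = refl_aff n (g i) (g j) k"
  proof -
    have lhs: "(g \<circ> refl_aff n i j \<circ> inv g) k = g (refl_aff n i j k')" by (simp add: k'_def)
    consider "k' mod int n = i mod int n" | "k' mod int n = j mod int n"
      | "k' mod int n \<noteq> i mod int n \<and> k' mod int n \<noteq> j mod int n" by blast
    then show ?thesis
    proof cases
      case 1
      then obtain t where t: "k' = i + t * int n" by (metis mod_eqE mult.commute)
      have "refl_aff n i j k' = j + t * int n" using 1 t unfolding refl_aff_def by simp
      then have "g (refl_aff n i j k') = g j + t * int n" using per_shift[OF g] by simp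
      moreover have "k = g i + t * int n" using kk t per_shift[OF g] by simp
      ultimately show ?thesis using lhs unfolding refl_aff_def by simp
    next
      case 2
      then obtain t where t: "k' = j + t * int n" by (metis mod_eqE mult.commute)
      have "refl_aff n i j k' = i + t * int n" using 2 t ij unfolding refl_aff_def by simp
      then have "g (refl_aff n i j k') = g i + t * int n" using per_shift[OF g] by simp
      moreover have "k = g j + t * int n" using kk t per_shift[OF g] by simp
      ultimately show ?thesis using lhs gij unfolding refl_aff_def by simp
    next
      case 3
      then have "refl_aff n i j k' = k'" by (simp add: refl_aff_other)
      moreover have "k mod int n \<noteq> g i mod int n" "k mod int n \<noteq> g j mod int n"
        using 3 per_cong[OF g n] kk by metis+
      ultimately show ?thesis using lhs kk by (simp add: refl_aff_other)
    qed
  qed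
qed

lemma prod_perms_Nil[simp]: "prod_perms [] = id" unfolding prod_perms_def by simp
lemma prod_perms_Cons[simp]: "prod_perms (x # xs) = x \<circ> prod_perms xs" unfolding prod_perms_def by simp
lemma prod_perms_append[simp]: "prod_perms (xs @ ys) = prod_perms xs \<circ> prod_perms ys"
  by (induction xs) (auto simp: comp_assoc)
lemma prod_perms_snoc: "prod_perms (xs @ [y]) = prod_perms xs \<circ> y" by simp

lemma per_prod: "(\<forall>x\<in>set xs. per n x) \<Longrightarrow> per n (prod_perms xs)"
  by (induction xs) (auto intro: per_comp per_id)

definition gpre :: "nat \<Rightarrow> nat \<Rightarrow> int \<Rightarrow> int" where
  "gpre n r = prod_perms (map (simple_refl n) [0..<r])"
definition cc :: "nat \<Rightarrow> int \<Rightarrow> int" where "cc n = gpre n n"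
definition Wf :: "nat \<Rightarrow> nat \<Rightarrow> int \<Rightarrow> int" where
  "Wf n j = prod_perms (map (sigma n) [1..<j+1])"
definition iota :: "nat \<Rightarrow> int \<Rightarrow> int" where "iota n k = k - k div int n"
definition zeta :: "nat \<Rightarrow> int \<Rightarrow> int" where "zeta n i = i + (i - 1) div (int n - 1)"

lemma simple_refl_ne: assumes "n \<ge> 2" "i < n" shows "int i mod int n \<noteq> (int i + 1) mod int n"
proof (cases "i + 1 < n")
  case True then show ?thesis using assms by simp
next
  case False
  then have e: "int i + 1 = int n" using assms by simp
  have "int i mod int n = int i" using assms by simp
  moreover have "int i \<noteq> 0" using e assms by simp
  ultimately show ?thesis unfolding e by simp
qed

lemma simple_refl_per: "n \<ge> 2 \<Longrightarrow> i < n \<Longrightarrow> per n (simple_refl n i)"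
  unfolding simple_refl_def by (rule refl_aff_per) (rule simple_refl_ne)

lemma mod_succ: assumes "k mod int n = int r" "r + 1 < n" shows "(k + 1) mod int n = int r + 1"
proof -
  have "(k + 1) mod int n = (k mod int n + 1) mod int n" by (simp add: mod_add_left_eq)
  also have "\<dots> = int r + 1" using assms by simp
  finally show ?thesis .
qed
lemma mod_pred: assumes "n \<ge> 2" "k mod int n = int r + 1" shows "(k - 1) mod int n = int r"
proof -
  have "(k - 1) mod int n = (k mod int n - 1) mod int n" by (simp add: mod_diff_left_eq)
  also have "\<dots> = int r mod int n" using assms by simp
  also have "\<dots> = int r"
  proof -
    have "int r + 1 < int n" using assms(2) pos_mod_bound[of "int n" k] assms(1) by linarith
    then show ?thesis by simp
  qed
  finally show ?thesis .
qed

lemma gpre_formula: "n \<ge> 2 \<Longrightarrow> r < n \<Longrightarrow>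
  gpre n r k = (if k mod int n < int r then k + 1 else if k mod int n = int r then k - int r else k)"
proof (induction r arbitrary: k)
  case 0
  have "0 \<le> k mod int n" using 0 by simp
  then show ?case by (simp add: gpre_def)
next
  case (Suc r)
  have IH: "gpre n r k' = (if k' mod int n < int r then k' + 1 else if k' mod int n = int r then k' - int r else k')" for k'
    using Suc by simp
  have g: "gpre n (Suc r) = gpre n r \<circ> simple_refl n r" unfolding gpre_def by simp
  have rr: "int r mod int n = int r" "(int r + 1) mod int n = int r + 1" using Suc.prems by auto
  show ?case
  proof (cases "k mod int n = int r")
    case True
    then have s: "simple_refl n r k = k + 1" unfolding simple_refl_def refl_aff_def using rr by simp
    have "(k+1) mod int n = int r + 1" using mod_succ[OF True] Suc.prems by simp
    then show ?thesis using g s IH[of "k+1"] True by simp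
  next
    case False
    show ?thesis
    proof (cases "k mod int n = int r + 1")
      case True
      then have s: "simple_refl n r k = k - 1" unfolding simple_refl_def refl_aff_def using rr False by simp
      have "(k-1) mod int n = int r" using mod_pred[OF _ True] Suc.prems by simp
      then show ?thesis using g s IH[of "k-1"] True by simp
    next
      case False2: False
      then have s: "simple_refl n r k = k" unfolding simple_refl_def refl_aff_def using rr False by simp
      show ?thesis using g s IH[of k] False False2 by auto
    qed
  qed
qed

lemma cc_formula: assumes n: "n \<ge> 2"
  shows "cc n k = (if k mod int n = 0 then k - int n else if k mod int n = int n - 1 then k + 2 else k + 1)"
proof -
  have c: "cc n = gpre n (n-1) \<circ> simple_refl n (n-1)"
  proof -
    have "[0..<n] = [0..<n-1] @ [n-1]" using n by (cases n) auto
    then show ?thesis unfolding cc_def gpre_def by simp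
  qed
  have G: "gpre n (n-1) k' = (if k' mod int n < int n - 1 then k' + 1 else if k' mod int n = int n - 1 then k' - (int n - 1) else k')" for k'
    using gpre_formula[of n "n-1" k'] n by simp
  have sr: "simple_refl n (n-1) = refl_aff n (int n - 1) (int n)" unfolding simple_refl_def using n by simp
  have m1: "(int n - 1) mod int n = int n - 1" using n by (intro mod_pos_pos_trivial) auto
  have kb: "0 \<le> k mod int n" "k mod int n < int n" using n by auto
  show ?thesis
  proof (cases "k mod int n = 0")
    case True
    then have "simple_refl n (n-1) k = k - 1" unfolding sr refl_aff_def using m1 n by auto
    moreover have "(k - 1) mod int n = int n - 1"
    proof -
      have "(k - 1) mod int n = (k mod int n - 1) mod int n" by (simp add: mod_diff_left_eq)
      also have "\<dots> = (-1) mod int n" using True by simp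
      also have "\<dots> = int n - 1" using n by (simp add: zmod_minus1)
      finally show ?thesis .
    qed
    ultimately show ?thesis using c G True by simp
  next
    case False
    show ?thesis
    proof (cases "k mod int n = int n - 1")
      case True
      then have "simple_refl n (n-1) k = k + 1" unfolding sr refl_aff_def using m1 by auto
      moreover have "(k + 1) mod int n = 0"
      proof -
        have "(k + 1) mod int n = (k mod int n + 1) mod int n" by (simp add: mod_add_left_eq)
        then show ?thesis using True by simp
      qed
      ultimately show ?thesis using c G True n by simp
    next
      case False2: False
      then have "simple_refl n (n-1) k = k" unfolding sr refl_aff_def using False m1 by auto
      then show ?thesis using c G False False2 kb by auto
    qed
  qed
qed

lemma mod_range1: assumes "n \<ge> 2" "k mod int n \<noteq> 0"
  shows "1 \<le> k mod int n" "k mod int n \<le> int n - 1"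
proof -
  have "0 \<le> k mod int n" "k mod int n < int n" using assms(1) by auto
  then show "1 \<le> k mod int n" "k mod int n \<le> int n - 1" using assms(2) by linarith+
qed

lemma div_shift: "int n \<ge> 2 \<Longrightarrow> (a * (int n - 1) + c) div (int n - 1) = a + c div (int n - 1)"
proof -
  assume "int n \<ge> 2"
  then have "int n - 1 \<noteq> 0" by simp
  then show ?thesis by (metis add.commute div_mult_self1)
qed

lemma iota_zeta_basic:
  assumes n: "n \<ge> 2" and k: "k mod int n \<noteq> 0"
  shows "zeta n (iota n k) = k"
proof -
  define a where "a = k div int n"
  define b where "b = k mod int n"
  have kab: "k = a * int n + b" unfolding a_def b_def by simp
  have b1: "1 \<le> b" "b \<le> int n - 1" using mod_range1[OF n k] unfolding b_def by auto
  have io: "iota n k = a * (int n - 1) + b" unfolding iota_def a_def[symmetric] using kab by (simp add: algebra_simps)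
  have "(a * (int n - 1) + (b - 1)) div (int n - 1) = a + (b - 1) div (int n - 1)"
    using n by (intro div_shift) simp
  moreover have "(b - 1) div (int n - 1) = 0" using b1 by (intro div_pos_pos_trivial) auto
  ultimately have "(a * (int n - 1) + b - 1) div (int n - 1) = a" by (simp add: algebra_simps)
  then show ?thesis unfolding zeta_def io using kab by (simp add: algebra_simps)
qed

lemma zeta_decomp:
  assumes n: "n \<ge> 2"
  shows "zeta n i = ((i - 1) div (int n - 1)) * int n + ((i - 1) mod (int n - 1) + 1)"
proof -
  have "i - 1 = ((i - 1) div (int n - 1)) * (int n - 1) + (i - 1) mod (int n - 1)" by (rule div_mult_mod_eq[symmetric])
  then show ?thesis unfolding zeta_def by (simp add: algebra_simps)
qed

lemma zeta_mod: assumes n: "n \<ge> 2" shows "zeta n i mod int n = (i - 1) mod (int n - 1) + 1"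
proof -
  have a: "0 \<le> (i - 1) mod (int n - 1)" "(i - 1) mod (int n - 1) < int n - 1" using n by auto
  have "zeta n i mod int n = ((i - 1) mod (int n - 1) + 1) mod int n"
    unfolding zeta_decomp[OF n] by simp
  also have "\<dots> = (i - 1) mod (int n - 1) + 1" using a by (intro mod_pos_pos_trivial) auto
  finally show ?thesis .
qed

lemma zeta_div: assumes n: "n \<ge> 2" shows "zeta n i div int n = (i - 1) div (int n - 1)"
proof -
  have a: "0 \<le> (i - 1) mod (int n - 1)" "(i - 1) mod (int n - 1) < int n - 1" using n by auto
  have "((i - 1) mod (int n - 1) + 1) div int n = 0" using a by (intro div_pos_pos_trivial) auto
  then show ?thesis unfolding zeta_decomp[OF n] using n by simp
qed

lemma zeta_nz: assumes "n \<ge> 2" shows "zeta n i mod int n \<noteq> 0"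
proof -
  have "0 \<le> (i - 1) mod (int n - 1)" using assms by simp
  then show ?thesis using zeta_mod[OF assms, of i] by linarith
qed

lemma iota_zeta: assumes n: "n \<ge> 2" shows "iota n (zeta n i) = i"
proof -
  have "i - 1 = ((i - 1) div (int n - 1)) * (int n - 1) + (i - 1) mod (int n - 1)" by (rule div_mult_mod_eq[symmetric])
  then show ?thesis unfolding iota_def zeta_div[OF n] using zeta_decomp[OF n, of i]
    by (simp add: algebra_simps)
qed

lemma cc_zeta: assumes n: "n \<ge> 2" and k: "k mod int n \<noteq> 0"
  shows "cc n k = zeta n (iota n k + 1)"
proof -
  define a where "a = k div int n"
  define b where "b = k mod int n"
  have kab: "k = a * int n + b" unfolding a_def b_def by simp
  have b1: "1 \<le> b" "b \<le> int n - 1" using mod_range1[OF n k] unfolding b_def by auto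
  have io: "iota n k + 1 = a * (int n - 1) + (b + 1)" unfolding iota_def a_def[symmetric] using kab by (simp add: algebra_simps)
  have dd: "(a * (int n - 1) + b) div (int n - 1) = a + b div (int n - 1)"
    using n by (intro div_shift) simp
  have zz: "zeta n (iota n k + 1) = a * (int n - 1) + b + 1 + (a + b div (int n - 1))"
    unfolding zeta_def io using dd by (simp add: algebra_simps)
  show ?thesis
  proof (cases "b = int n - 1")
    case True
    then have "b div (int n - 1) = 1" using n by simp
    then show ?thesis using zz cc_formula[OF n, of k] True k kab unfolding b_def by (simp add: algebra_simps)
  next
    case False
    then have "b div (int n - 1) = 0" using b1 by (intro div_pos_pos_trivial) auto
    moreover have "k mod int n \<noteq> int n - 1" using False b_def by simp
    ultimately show ?thesis using zz cc_formula[OF n, of k] k kab unfolding b_def[symmetric] by (simp add: algebra_simps)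
  qed
qed

lemma cc_pow: assumes n: "n \<ge> 2"
  shows "(cc n ^^ q) k = (if k mod int n = 0 then k - int q * int n else zeta n (iota n k + int q))"
proof (induction q)
  case 0 then show ?case using iota_zeta_basic[OF n] by simp
next
  case (Suc q)
  show ?case
  proof (cases "k mod int n = 0")
    case True
    have "int n dvd k" using True by (simp add: dvd_eq_mod_eq_0)
    then have "int n dvd k - int q * int n" by simp
    then have "(k - int q * int n) mod int n = 0" by (simp add: dvd_eq_mod_eq_0)
    moreover have e: "(cc n ^^ q) k = k - int q * int n" using Suc True by simp
    ultimately have "(cc n ^^ Suc q) k = k - int q * int n - int n"
      using cc_formula[OF n, of "k - int q * int n"] by simp
    then show ?thesis using True by (simp add: algebra_simps)
  next
    case False
    have "(cc n ^^ Suc q) k = cc n (zeta n (iota n k + int q))" using Suc False by simp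
    also have "\<dots> = zeta n (iota n k + int q + 1)"
      using cc_zeta[OF n zeta_nz[OF n]] iota_zeta[OF n] by simp
    finally show ?thesis using False by (simp add: algebra_simps)
  qed
qed

lemma gpre_per: "n \<ge> 2 \<Longrightarrow> r \<le> n \<Longrightarrow> per n (gpre n r)"
  unfolding gpre_def by (rule per_prod) (auto intro: simple_refl_per)

lemma cc_per: "n \<ge> 2 \<Longrightarrow> per n (cc n)" unfolding cc_def by (rule gpre_per) auto

lemma funpow_per: "per n f \<Longrightarrow> per n (f ^^ q)"
  by (induction q) (auto intro: per_comp per_id)

lemma sigma_alt: "sigma n i = simple_refl n ((i - 1) mod n)" unfolding sigma_def by simp

lemma map_sigma: "map (sigma n) [1..<j+1] = map (\<lambda>i. simple_refl n (i mod n)) [0..<j]"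
proof -
  have "[1..<j+1] = map Suc [0..<j]" by (simp add: map_Suc_upt)
  then show ?thesis unfolding sigma_def by simp
qed

lemma Wf_alt: "Wf n j = prod_perms (map (\<lambda>i. simple_refl n (i mod n)) [0..<j])"
  unfolding Wf_def map_sigma ..

lemma Wf_qr: assumes n: "n \<ge> 2" and r: "r < n"
  shows "Wf n (q * n + r) = (cc n ^^ q) \<circ> gpre n r"
proof (induction q)
  case 0
  have m: "map (\<lambda>i. simple_refl n (i mod n)) [0..<r] = map (simple_refl n) [0..<r]"
    using r by (intro map_cong) auto
  have "Wf n r = gpre n r" unfolding Wf_alt gpre_def m ..
  then show ?case by simp
next
  case (Suc q)
  let ?h = "\<lambda>i. simple_refl n (i mod n)"
  have u: "[0..<Suc q * n + r] = [0..<n] @ [n..<n + (q * n + r)]"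
    by (simp add: upt_add_eq_append[symmetric] add.assoc)
  have m1: "map ?h [0..<n] = map (simple_refl n) [0..<n]" by (intro map_cong) auto
  have m2: "map ?h [n..<n + (q * n + r)] = map ?h [0..<q * n + r]"
  proof -
    have "[n..<n + (q * n + r)] = map (\<lambda>i. i + n) [0..<q*n+r]"
      by (metis add.commute add_0 map_add_upt)
    then show ?thesis by simp
  qed
  have "Wf n (Suc q * n + r) = cc n \<circ> Wf n (q * n + r)"
    unfolding Wf_alt u map_append prod_perms_append m1 m2 cc_def gpre_def ..
  then show ?case using Suc by (simp add: comp_assoc funpow_Suc_right[symmetric])
qed

lemma Wf_per: "n \<ge> 2 \<Longrightarrow> per n (Wf n j)"
  unfolding Wf_alt by (rule per_prod) (auto intro: simple_refl_per)

lemma Wf_Suc: "Wf n (Suc j) = Wf n j \<circ> sigma n (Suc j)"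
  unfolding Wf_def by simp

lemma tau_formula: assumes n: "n \<ge> 2" and j: "j \<ge> 1"
  shows "Wf n (j-1) \<circ> sigma n j \<circ> inv (Wf n (j-1)) = refl_aff n 0 (zeta n (int j))"
proof -
  define q where "q = (j - 1) div n"
  define r where "r = (j - 1) mod n"
  have r: "r < n" unfolding r_def using n by simp
  have jqr: "j - 1 = q * n + r" unfolding q_def r_def by simp
  have W: "Wf n (j-1) = (cc n ^^ q) \<circ> gpre n r" using Wf_qr[OF n r] jqr by simp
  have sg: "sigma n j = refl_aff n (int r) (int r + 1)" unfolding sigma_def simple_refl_def r_def ..
  have ne: "int r mod int n \<noteq> (int r + 1) mod int n" using simple_refl_ne[OF n r] .
  have conj: "Wf n (j-1) \<circ> sigma n j \<circ> inv (Wf n (j-1)) = refl_aff n (Wf n (j-1) (int r)) (Wf n (j-1) (int r + 1))"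
    unfolding sg by (rule conj_refl[OF Wf_per[OF n]]) (use n ne in auto)
  have g0: "gpre n r (int r) = 0" using gpre_formula[OF n r, of "int r"] r by simp
  have W0: "Wf n (j-1) (int r) = - int q * int n" using W g0 cc_pow[OF n, of q 0] by simp
  have W1: "Wf n (j-1) (int r + 1) = zeta n (int r + 1 + int q)"
  proof (cases "r + 1 < n")
    case True
    have "gpre n r (int r + 1) = int r + 1" using gpre_formula[OF n r, of "int r + 1"] True by simp
    moreover have "(int r + 1) mod int n = int r + 1" using True by simp
    moreover have "iota n (int r + 1) = int r + 1" unfolding iota_def using True by simp
    ultimately show ?thesis using W cc_pow[OF n, of q "int r + 1"] True by simp
  next
    case False
    then have rn: "int r + 1 = int n" using r by simp
    have r1: "r \<ge> 1" using rn n by simp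
    have "gpre n r (int r + 1) = int n + 1" using gpre_formula[OF n r, of "int r + 1"] rn r1 by simp
    moreover have "(int n + 1) mod int n = 1" using n by simp
    moreover have "iota n (int n + 1) = int r + 1"
    proof -
      have "(1 + 1 * int n) div int n = 1 + 1 div int n" using n by (intro div_mult_self1) simp
      moreover have "1 div int n = 0" using n by simp
      ultimately have "(int n + 1) div int n = 1" by (simp add: add.commute)
      then show ?thesis unfolding iota_def using rn by simp
    qed
    ultimately show ?thesis using W cc_pow[OF n, of q "int n + 1"] by simp
  qed
  have sh: "refl_aff n (- int q * int n) (zeta n (int r + 1 + int q)) = refl_aff n 0 (zeta n (int r + 1 + int q) + int q * int n)"
    using refl_aff_shift[of n 0 "- int q" "zeta n (int r + 1 + int q) + int q * int n"] by simp
  have "zeta n (int j) = zeta n (int r + 1 + int q) + int q * int n"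
  proof -
    have j1: "int (j - 1) = int q * int n + int r" using jqr by simp
    have j2: "int j - 1 = int (j - 1)" using j by simp
    have jj: "int j - 1 = int q * (int n - 1) + (int q + int r)" using j1 j2 by (simp add: algebra_simps del: of_nat_diff)
    have D: "(int j - 1) div (int n - 1) = int q + (int q + int r) div (int n - 1)"
      unfolding jj using n by (intro div_shift) simp
    have A: "zeta n (int j) = int j + (int q + (int q + int r) div (int n - 1))"
      unfolding zeta_def D ..
    have e: "int r + 1 + int q - 1 = int q + int r" by simp
    have B: "zeta n (int r + 1 + int q) = int r + 1 + int q + (int q + int r) div (int n - 1)"
      unfolding zeta_def e ..
    have C: "int j = int q * int n + int r + 1" using j1 j2 by linarith
    show ?thesis using A B C by linarith
  qed
  then show ?thesis using conj W0 W1 sh by simp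
qed

lemma Wf_full: assumes n: "n \<ge> 2" shows "Wf n (n * (n - 1)) = lambda_aff n"
proof (rule ext)
  fix k
  have "Wf n (n * (n-1)) = cc n ^^ (n-1)" using Wf_qr[OF n, of 0 "n-1"] n
    by (simp add: gpre_def mult.commute)
  moreover have "(cc n ^^ (n-1)) k = lambda_aff n k"
  proof (cases "k mod int n = 0")
    case True
    have "(cc n ^^ (n-1)) k = k - int (n-1) * int n" using cc_pow[OF n, of "n-1" k] True by simp
    moreover have "int (n-1) = int n - 1" using n by simp
    ultimately show ?thesis using True unfolding lambda_aff_def by (simp add: algebra_simps)
  next
    case False
    have "(k + 1 * int n) div int n = 1 + k div int n" using n by (intro div_mult_self1) simp
    then have "(k + int n) div int n = k div int n + 1" by simp
    moreover have "int (n-1) = int n - 1" using n by simp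
    ultimately have "iota n k + int (n - 1) = iota n (k + int n)" unfolding iota_def by simp
    moreover have "(k + int n) mod int n \<noteq> 0" using False by simp
    ultimately show ?thesis using cc_pow[OF n, of "n-1" k] False iota_zeta_basic[OF n] unfolding lambda_aff_def by simp
  qed
  ultimately show "Wf n (n * (n - 1)) k = lambda_aff n k" by simp
qed

lemma sorted_filter_upt:
  assumes s: "sorted_wrt R (map g (filter Q [lo..<hi]))"
    and q: "Q i" "Q i'" and r: "lo \<le> i" "i < i'" "i' < hi"
  shows "R (g i) (g i')"
proof -
  have sp: "[lo..<hi] = [lo..<i'] @ [i'..<hi]" using upt_add_eq_append[of lo i' "hi - i'"] r by simp
  have "sorted_wrt R (map g (filter Q [lo..<i']) @ map g (filter Q [i'..<hi]))"
    using s unfolding sp by simp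
  then have "\<forall>x\<in>set (map g (filter Q [lo..<i'])). \<forall>y\<in>set (map g (filter Q [i'..<hi])). R x y"
    by (simp add: sorted_wrt_append)
  moreover have "g i \<in> set (map g (filter Q [lo..<i']))" using q r by auto
  moreover have "g i' \<in> set (map g (filter Q [i'..<hi]))" using q r by auto
  ultimately show ?thesis by blast
qed

lemma butlast_filter_prefix:
  assumes "Q i''" "i' < i''" "i'' < hi" "lo \<le> i'"
  shows "\<exists>rest. butlast (filter Q [lo..<hi]) = filter Q [lo..<Suc i'] @ rest"
proof -
  have sp: "[lo..<hi] = [lo..<Suc i'] @ [Suc i'..<hi]" using upt_add_eq_append[of lo "Suc i'" "hi - Suc i'"] assms by simp
  have ne: "filter Q [Suc i'..<hi] \<noteq> []" using assms by (auto simp: filter_empty_conv)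
  show ?thesis unfolding sp filter_append butlast_append using ne by auto
qed

lemma sorted_map_mono:
  assumes "sorted_wrt (<) xs" "\<And>x y. x \<in> set xs \<Longrightarrow> y \<in> set xs \<Longrightarrow> x < y \<Longrightarrow> f x < (f y :: int)"
  shows "sorted_wrt (<) (map f xs)"
  using assms by (induction xs) (auto simp: sorted_wrt_map)

lemma cyc_key:
  fixes k :: int and cs :: "int list"
  assumes c: "cyc_cond k cs" and k: "1 \<le> k" "k < int n"
    and el: "\<forall>c\<in>set cs. 1 \<le> c \<and> c \<le> int n \<and> c \<noteq> k"
  shows "sorted_wrt (<) (map (\<lambda>c. (c - k) mod int n) (butlast cs))"
proof -
  obtain j where j: "j \<in> {1..length cs}"
    and s: "sorted_wrt (<) (drop (j-1) (butlast cs) @ [k] @ take (j-1) cs)"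
    using c unfolding cyc_cond_def by blast
  define D where "D = drop (j-1) (butlast cs)"
  define T where "T = take (j-1) cs"
  have bl: "butlast cs = T @ D"
  proof -
    have "take (j-1) (butlast cs) = T" unfolding T_def by (rule take_butlast) (use j in auto)
    then show ?thesis unfolding D_def by (metis append_take_drop_id)
  qed
  have sD: "sorted_wrt (<) D" and sT: "sorted_wrt (<) T"
    and Dk: "\<forall>x\<in>set D. x < k" and Tk: "\<forall>x\<in>set T. k < x"
    using s unfolding D_def[symmetric] T_def[symmetric] by (auto simp: sorted_wrt_append)
  have setD: "set D \<subseteq> set cs" unfolding D_def by (meson in_set_butlastD in_set_dropD subsetI)
  have setT: "set T \<subseteq> set cs" unfolding T_def by (meson in_set_takeD subsetI)
  have kT: "(x - k) mod int n = x - k" if "x \<in> set T" for x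
  proof -
    have "x \<in> set cs" using that setT by blast
    then have "x \<le> int n" using el by blast
    then show ?thesis using that Tk k by (intro mod_pos_pos_trivial) auto
  qed
  have kD: "(x - k) mod int n = x - k + int n" if "x \<in> set D" for x
  proof -
    have "(x - k) mod int n = (x - k + int n) mod int n" by simp
    also have "\<dots> = x - k + int n"
    proof -
      have "x \<in> set cs" using that setD by blast
      then have "1 \<le> x" using el by blast
      moreover have "x < k" using that Dk by blast
      ultimately show ?thesis using k by (intro mod_pos_pos_trivial) auto
    qed
    finally show ?thesis .
  qed
  have "sorted_wrt (<) (map (\<lambda>c. (c - k) mod int n) T)"
    by (rule sorted_map_mono[OF sT]) (simp add: kT)
  moreover have "sorted_wrt (<) (map (\<lambda>c. (c - k) mod int n) D)"
    by (rule sorted_map_mono[OF sD]) (simp add: kD)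
  moreover have "\<forall>x\<in>set T. \<forall>y\<in>set D. (x - k) mod int n < (y - k) mod int n"
  proof (intro ballI)
    fix x y assume xy: "x \<in> set T" "y \<in> set D"
    have "x \<in> set cs" "y \<in> set cs" using xy setT setD by blast+
    then have "x \<le> int n" "1 \<le> y" using el by blast+
    then show "(x - k) mod int n < (y - k) mod int n" using kT[OF xy(1)] kD[OF xy(2)] by simp
  qed
  ultimately show ?thesis unfolding bl by (auto simp: sorted_wrt_append)
qed

lemma srt_key:
  fixes cs :: "int list"
  assumes s: "sorted_wrt (<) cs" and el: "\<forall>c\<in>set cs. 1 \<le> c \<and> c \<le> int n \<and> c \<noteq> int n"
  shows "sorted_wrt (<) (map (\<lambda>c. (c - int n) mod int n) cs)"
proof -
  have "(c - int n) mod int n = c" if "c \<in> set cs" for c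
  proof -
    have "(c - int n) mod int n = c mod int n" by (simp add: mod_diff_right_eq[symmetric])
    also have "\<dots> = c" using that el by (intro mod_pos_pos_trivial) auto
    finally show ?thesis .
  qed
  then have "map (\<lambda>c. (c - int n) mod int n) cs = cs" by (induction cs) auto
  then show ?thesis using s by simp
qed

fun xpos :: "(nat \<Rightarrow> int) \<Rightarrow> (nat \<Rightarrow> int) \<Rightarrow> nat \<Rightarrow> int" where
  "xpos a b 0 = a 0"
| "xpos a b (Suc i) = xpos a b i + (b (Suc i) - a i)"

locale fsetup =
  fixes n :: nat and rs :: "(int \<Rightarrow> int) list" and a b :: "nat \<Rightarrow> int"
  assumes n2: "n \<ge> 2"
    and wit: "tree_like_wit n rs a b"
    and prodl: "prod_perms rs = lambda_aff n"
    and srt: "sorted_wrt (<) (nbr_list n a b (int n))"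
    and cyc: "\<forall>k\<in>{1..<int n}. cyc_cond k (nbr_list n a b k)"
begin

abbreviation "m \<equiv> 2 * n - 2"
definition x where "x = xpos a b"
definition P where "P t = prod_perms (take t rs)"
definition y where "y p = P (p - 1) (x p)"
definition Desc where "Desc p \<longleftrightarrow> 1 \<le> p \<and> p \<le> m \<and> (\<forall>t<p. x t mod int n \<noteq> x p mod int n)"
definition Fin where "Fin p \<longleftrightarrow> 1 \<le> p \<and> p \<le> m \<and> (\<forall>t. p \<le> t \<and> t \<le> m \<longrightarrow> x t mod int n \<noteq> x (p-1) mod int n)"

lemma len: "length rs = m" using wit unfolding tree_like_wit_def by blast
lemma W1: "i \<in> {1..m} \<Longrightarrow> a (i-1) mod int n \<noteq> b i mod int n \<and> rs ! (i-1) = refl_aff n (a (i-1)) (b i) \<and> a (i-1) < b i"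
  using wit unfolding tree_like_wit_def by blast
lemma W2: "i \<in> {1..2*n-3} \<Longrightarrow> a i mod int n = b i mod int n"
  using wit unfolding tree_like_wit_def by blast

lemma npos: "int n > 0" using n2 by simp

lemma xSuc: "x (Suc i) = x i + (b (Suc i) - a i)" unfolding x_def by simp

lemma xa: "i \<le> m - 1 \<Longrightarrow> x i mod int n = a i mod int n"
proof (induction i)
  case 0 then show ?case unfolding x_def by simp
next
  case (Suc i)
  then have IH: "x i mod int n = a i mod int n" by simp
  have "x (Suc i) mod int n = (a i + (b (Suc i) - a i)) mod int n"
    unfolding xSuc using IH by (rule mod_add_cong) simp
  also have "\<dots> = b (Suc i) mod int n" by simp
  also have "\<dots> = a (Suc i) mod int n" using W2[of "Suc i"] Suc.prems n2 by simp
  finally show ?case .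
qed

lemma xb: "1 \<le> i \<Longrightarrow> i \<le> m \<Longrightarrow> x i mod int n = b i mod int n"
proof -
  assume i: "1 \<le> i" "i \<le> m"
  then obtain j where j: "i = Suc j" by (cases i) auto
  have IH: "x j mod int n = a j mod int n" using xa[of j] i j by simp
  have "x (Suc j) mod int n = (a j + (b (Suc j) - a j)) mod int n"
    unfolding xSuc using IH by (rule mod_add_cong) simp
  then show ?thesis using j by simp
qed

lemma dx: "1 \<le> i \<Longrightarrow> x i - x (i-1) = b i - a (i-1)"
  by (cases i) (auto simp: xSuc)

lemma dpos: "1 \<le> i \<Longrightarrow> i \<le> m \<Longrightarrow> x (i-1) < x i"
  using dx W1[of i] by fastforce

lemma xne: "1 \<le> i \<Longrightarrow> i \<le> m \<Longrightarrow> x (i-1) mod int n \<noteq> x i mod int n"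
  using xa[of "i-1"] xb[of i] W1[of i] by auto

lemma rdef: "1 \<le> i \<Longrightarrow> i \<le> m \<Longrightarrow> rs ! (i-1) = refl_aff n (x (i-1)) (x i)"
proof -
  assume i: "1 \<le> i" "i \<le> m"
  have "rs ! (i-1) = refl_aff n (a (i-1)) (b i)" using W1[of i] i by auto
  also have "\<dots> = refl_aff n (x (i-1)) (x i)"
    by (rule refl_aff_eq) (use W1[of i] i xa[of "i-1"] dx[of i] in auto)
  finally show ?thesis .
qed

lemma rdef': "t < m \<Longrightarrow> rs ! t = refl_aff n (x t) (x (Suc t))"
  using rdef[of "Suc t"] by simp

lemma xne': "t < m \<Longrightarrow> x t mod int n \<noteq> x (Suc t) mod int n"
  using xne[of "Suc t"] by simp

lemma dpos': "t < m \<Longrightarrow> x t < x (Suc t)"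
  using dpos[of "Suc t"] by simp

lemma xmono: "t < t' \<Longrightarrow> t' \<le> m \<Longrightarrow> x t < x t'"
proof (induction t')
  case 0 then show ?case by simp
next
  case (Suc t')
  show ?case
  proof (cases "t = t'")
    case True then show ?thesis using dpos'[of t'] Suc by simp
  next
    case False
    then have "x t < x t'" using Suc by simp
    then show ?thesis using dpos'[of t'] Suc by simp
  qed
qed

lemma rper: "t < m \<Longrightarrow> per n (rs ! t)"
  using rdef'[of t] xne'[of t] refl_aff_per by simp

lemma rinv: "t < m \<Longrightarrow> (rs ! t) ((rs ! t) q) = q"
  using rdef'[of t] xne'[of t] refl_aff_invol by simp

lemma P0: "P 0 = id" unfolding P_def by simp

lemma PSuc: "t < m \<Longrightarrow> P (Suc t) = P t \<circ> rs ! t"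
  unfolding P_def using len by (simp add: take_Suc_conv_app_nth)

lemma Pper: "per n (P t)"
  unfolding P_def
proof (rule per_prod, intro ballI)
  fix r assume "r \<in> set (take t rs)"
  then have "r \<in> set rs" by (meson in_set_takeD)
  then obtain i where "i < m" "r = rs ! i" using len by (metis in_set_conv_nth)
  then show "per n r" using rper by simp
qed

lemma Pm: "P m = lambda_aff n" unfolding P_def using len prodl by simp

lemma chain: "t \<le> m \<Longrightarrow> P t (x t) = x 0"
proof (induction t)
  case 0 then show ?case by (simp add: P0)
next
  case (Suc t)
  have "P (Suc t) (x (Suc t)) = P t ((rs ! t) (x (Suc t)))" using PSuc Suc by simp
  also have "(rs ! t) (x (Suc t)) = x t" using rdef'[of t] xne'[of t] Suc refl_aff_at_j by simp
  finally show ?case using Suc by simp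
qed

lemma mpos: "m \<ge> 2" using n2 by simp

lemma xm: "x m mod int n = 0" and xm': "x m = x 0 + int n * (int n - 1)"
proof -
  have l: "lambda_aff n (x m) = x 0" using chain[of m] Pm by simp
  have lt: "x 0 < x m" using xmono[of 0 m] mpos by simp
  show xm0: "x m mod int n = 0"
  proof (rule ccontr)
    assume "x m mod int n \<noteq> 0"
    then have "lambda_aff n (x m) = x m + int n" unfolding lambda_aff_def by simp
    then show False using l lt by simp
  qed
  then show "x m = x 0 + int n * (int n - 1)" using l unfolding lambda_aff_def by simp
qed

lemma x0: "x 0 mod int n = 0"
proof -
  have "x m = x 0 + (int n - 1) * int n" using xm' by (simp add: algebra_simps)
  then have "x m mod int n = x 0 mod int n" by simp
  then show ?thesis using xm by simp
qed

lemma inv_stay: "t1 \<le> t2 \<Longrightarrow> t2 \<le> m \<Longrightarrow> (\<forall>i. t1 \<le> i \<and> i \<le> t2 \<longrightarrow> q mod int n \<noteq> x i mod int n) \<Longrightarrow> P t2 q = P t1 q"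
proof (induction t2)
  case 0 then show ?case by simp
next
  case (Suc t)
  show ?case
  proof (cases "t1 = Suc t")
    case True then show ?thesis by simp
  next
    case False
    then have t1t: "t1 \<le> t" using Suc by simp
    have "P (Suc t) q = P t ((rs ! t) q)" using PSuc Suc by simp
    also have "(rs ! t) q = q"
    proof -
      have h1: "q mod int n \<noteq> x t mod int n" using Suc.prems(3)[rule_format, of t] t1t by simp
      have h2: "q mod int n \<noteq> x (Suc t) mod int n" using Suc.prems(3)[rule_format, of "Suc t"] t1t by simp
      show ?thesis using Suc.prems(2) h1 h2 by (simp add: rdef' refl_aff_other)
    qed
    finally show ?thesis using Suc t1t by simp
  qed
qed

lemma ub: "t \<le> m \<Longrightarrow> q mod int n \<noteq> x t mod int n \<Longrightarrow> P t q \<le> q + int n"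
proof (induction t arbitrary: q rule: inc_induct)
  case base
  then have "q mod int n \<noteq> 0" using xm by simp
  then show ?case using Pm unfolding lambda_aff_def by simp
next
  case (step t)
  have tm: "t < m" using step by simp
  have "P t q = P t ((rs ! t) ((rs ! t) q))" using rinv tm by simp
  also have "\<dots> = P (Suc t) ((rs ! t) q)" using PSuc tm by simp
  finally have e: "P t q = P (Suc t) ((rs ! t) q)" .
  show ?case
  proof (cases "q mod int n = x (Suc t) mod int n")
    case True
    have rq: "(rs ! t) q = q + (x t - x (Suc t))"
      unfolding rdef'[OF tm] refl_aff_def using True step.prems by simp
    have "(q + (x t - x (Suc t))) mod int n = (x (Suc t) + (x t - x (Suc t))) mod int n"
      using True by (rule mod_add_cong) simp
    then have "(rs ! t) q mod int n \<noteq> x (Suc t) mod int n" using rq xne'[OF tm] by simp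
    then have "P (Suc t) ((rs ! t) q) \<le> (rs ! t) q + int n" using step.IH by simp
    then show ?thesis using e rq dpos'[OF tm] by simp
  next
    case False
    have "(rs ! t) q = q" unfolding rdef'[OF tm] using False step.prems by (intro refl_aff_other) auto
    then show ?thesis using e step.IH False by simp
  qed
qed

lemma y_alt: "1 \<le> p \<Longrightarrow> p \<le> m \<Longrightarrow> y p = P p (x (p-1))"
proof -
  assume p: "1 \<le> p" "p \<le> m"
  then obtain t where t: "p = Suc t" by (cases p) auto
  have "P p (x (p-1)) = P t ((rs ! t) (x t))" using PSuc p t by simp
  also have "(rs ! t) (x t) = x (Suc t)" using rdef'[of t] p t refl_aff_at_i by simp
  finally show ?thesis unfolding y_def using t by simp
qed

lemma yD: "Desc p \<Longrightarrow> y p = x p"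
proof -
  assume D: "Desc p"
  have "P (p-1) (x p) = P 0 (x p)"
  proof (rule inv_stay)
    show "\<forall>i. 0 \<le> i \<and> i \<le> p - 1 \<longrightarrow> x p mod int n \<noteq> x i mod int n"
    proof (intro allI impI)
      fix i assume "0 \<le> i \<and> i \<le> p - 1"
      then have "i < p" using D unfolding Desc_def by auto
      then show "x p mod int n \<noteq> x i mod int n" using D unfolding Desc_def by metis
    qed
  qed (use D in \<open>auto simp: Desc_def\<close>)
  then show ?thesis unfolding y_def P0 by simp
qed

lemma yF: "Fin p \<Longrightarrow> y p = x (p-1) + int n"
proof -
  assume F: "Fin p"
  have "P m (x (p-1)) = P p (x (p-1))"
    by (rule inv_stay) (use F in \<open>auto simp: Fin_def\<close>)
  moreover have "x (p-1) mod int n \<noteq> 0" using F xm unfolding Fin_def by force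
  ultimately have "P p (x (p-1)) = x (p-1) + int n" using Pm unfolding lambda_aff_def by simp
  then show ?thesis using y_alt F unfolding Fin_def by simp
qed

lemma dD: "Desc p \<Longrightarrow> x p - x (p-1) < int n"
proof -
  assume D: "Desc p"
  have p: "1 \<le> p" "p \<le> m" using D Desc_def by auto
  have "y p \<le> x (p-1) + int n" using y_alt[OF p] ub[of p "x (p-1)"] xne[OF p] p by simp
  then have le: "x p - x (p-1) \<le> int n" using yD[OF D] by simp
  have "x p - x (p-1) \<noteq> int n"
  proof
    assume "x p - x (p-1) = int n"
    then have "x p = x (p-1) + int n" by simp
    then have "x p mod int n = x (p-1) mod int n" by simp
    then show False using xne[OF p] by simp
  qed
  then show ?thesis using le by simp
qed

lemma yrec:
  assumes sp: "s < p" "p \<le> m" and c: "x s mod int n = x p mod int n"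
    and nb: "\<forall>t. s < t \<and> t < p \<longrightarrow> x t mod int n \<noteq> x p mod int n"
  shows "y p = y (Suc s) + (x p - x s)"
proof -
  have s1: "Suc s \<le> p - 1"
  proof (rule ccontr)
    assume "\<not> Suc s \<le> p - 1"
    then have "s = p - 1" using sp by simp
    then show False using xne[of p] sp c by simp
  qed
  have "y p = P (Suc s) (x p)" unfolding y_def
  proof (rule inv_stay)
    show "\<forall>i. Suc s \<le> i \<and> i \<le> p - 1 \<longrightarrow> x p mod int n \<noteq> x i mod int n"
    proof (intro allI impI)
      fix i assume "Suc s \<le> i \<and> i \<le> p - 1"
      then have "s < i" "i < p" using sp by auto
      then show "x p mod int n \<noteq> x i mod int n" using nb by metis
    qed
  qed (use s1 sp in auto)
  also have "\<dots> = P s ((rs ! s) (x p))" using PSuc sp by simp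
  also have "(rs ! s) (x p) = x (Suc s) + (x p - x s)"
  proof -
    have "s < m" using sp by simp
    then show ?thesis using rdef'[of s] c by (simp add: refl_aff_def)
  qed
  finally have e: "y p = P s (x (Suc s) + (x p - x s))" .
  obtain kk where kk: "x p = x s + kk * int n" using c by (metis mod_eqE mult.commute)
  have "P s (x (Suc s) + kk * int n) = P s (x (Suc s)) + kk * int n" using per_shift[OF Pper] .
  then show ?thesis using e kk unfolding y_def by simp
qed

end

lemma modn_eq: "n > 0 \<Longrightarrow> modn n v = modn n w \<longleftrightarrow> v mod int n = w mod int n"
proof -
  assume n: "n > 0"
  have "v mod int n < int n" "w mod int n < int n" using n by auto
  then show ?thesis unfolding modn_def by auto
qed

lemma modn_range: "n > 0 \<Longrightarrow> 1 \<le> modn n v \<and> modn n v \<le> int n"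
proof -
  assume n: "n > 0"
  have "0 \<le> v mod int n" "v mod int n < int n" using n by auto
  then show ?thesis unfolding modn_def by auto
qed

lemma modn_mod: "modn n v mod int n = v mod int n"
  unfolding modn_def by auto

context fsetup begin

lemma visited: assumes k: "1 \<le> k" "k < int n" shows "\<exists>t<m. x t mod int n = k"
proof -
  have "cyc_cond k (nbr_list n a b k)" using cyc k by auto
  then have "nbr_list n a b k \<noteq> []" unfolding cyc_cond_def by auto
  then obtain i where i: "i \<in> set [1..<2*n-1]" "modn n (a (i-1)) = k"
    unfolding nbr_list_def by (auto simp: filter_empty_conv)
  have "a (i-1) mod int n = k" using i(2) k unfolding modn_def by (auto split: if_splits)
  moreover have "i - 1 \<le> m - 1" using i(1) by auto
  then have "x (i-1) mod int n = a (i-1) mod int n" using xa[of "i-1"] by blast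
  moreover have "i - 1 < m" using i(1) by auto
  ultimately show ?thesis by metis
qed

lemma x_mod_range: "0 \<le> x t mod int n" "x t mod int n < int n" using npos by auto

end

context fsetup begin
lemma bijD: "bij_betw (\<lambda>p. x p mod int n) {p. Desc p} {1..<int n}"
proof (rule bij_betw_imageI)
  show "inj_on (\<lambda>p. x p mod int n) {p. Desc p}"
  proof (rule inj_onI)
    fix p p' assume h: "p \<in> {p. Desc p}" "p' \<in> {p. Desc p}" "x p mod int n = x p' mod int n"
    show "p = p'"
    proof (rule ccontr)
      assume "p \<noteq> p'"
      then consider "p < p'" | "p' < p" by linarith
      then show False
      proof cases
        case 1
        have "\<forall>t<p'. x t mod int n \<noteq> x p' mod int n" using h(2) unfolding Desc_def by blast
        then show ?thesis using 1 h(3) by blast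
      next
        case 2
        have "\<forall>t<p. x t mod int n \<noteq> x p mod int n" using h(1) unfolding Desc_def by blast
        then show ?thesis using 2 h(3) by metis
      qed
    qed
  qed
  show "(\<lambda>p. x p mod int n) ` {p. Desc p} = {1..<int n}"
  proof (intro equalityI subsetI)
    fix k assume "k \<in> (\<lambda>p. x p mod int n) ` {p. Desc p}"
    then obtain p where p: "Desc p" "k = x p mod int n" by auto
    have "\<forall>t<p. x t mod int n \<noteq> x p mod int n" "1 \<le> p" using p(1) unfolding Desc_def by blast+
    then have "x 0 mod int n \<noteq> x p mod int n" by simp
    then have "x p mod int n \<noteq> 0" using x0 by simp
    then show "k \<in> {1..<int n}" using p x_mod_range[of p] by auto
  next
    fix k assume k: "k \<in> {1..<int n}"
    obtain t where t: "t < m" "x t mod int n = k" using visited k by auto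
    define t0 where "t0 = (LEAST t. x t mod int n = k)"
    have t0: "x t0 mod int n = k" unfolding t0_def by (rule LeastI[of _ t]) (use t in simp)
    have t0le: "t0 \<le> t" unfolding t0_def by (rule Least_le) (use t in simp)
    have t0ne: "t0 \<noteq> 0"
    proof
      assume "t0 = 0"
      then have "k = 0" using t0 x0 by simp
      then show False using k by simp
    qed
    have "Desc t0" unfolding Desc_def
    proof (intro conjI allI impI)
      show "1 \<le> t0" using t0ne by simp
      show "t0 \<le> m" using t0le t by simp
      fix t' assume "t' < t0"
      then have "x t' mod int n \<noteq> k" unfolding t0_def by (rule not_less_Least)
      then show "x t' mod int n \<noteq> x t0 mod int n" using t0 by simp
    qed
    then show "k \<in> (\<lambda>p. x p mod int n) ` {p. Desc p}" using t0 by (intro image_eqI[of _ _ t0]) auto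
  qed
qed

end

context fsetup begin
lemma bijF: "bij_betw (\<lambda>p. x (p-1) mod int n) {p. Fin p} {1..<int n}"
proof (rule bij_betw_imageI)
  show "inj_on (\<lambda>p. x (p-1) mod int n) {p. Fin p}"
  proof (rule inj_onI)
    fix p p' assume h: "p \<in> {p. Fin p}" "p' \<in> {p. Fin p}" "x (p-1) mod int n = x (p'-1) mod int n"
    show "p = p'"
    proof (rule ccontr)
      assume "p \<noteq> p'"
      then consider "p < p'" | "p' < p" by linarith
      then show False
      proof cases
        case 1
        have "p \<le> p' - 1" "p' - 1 \<le> m" using 1 h unfolding Fin_def by auto
        moreover have "\<forall>t. p \<le> t \<and> t \<le> m \<longrightarrow> x t mod int n \<noteq> x (p-1) mod int n" using h(1) unfolding Fin_def by blast
        ultimately show ?thesis using h(3) by metis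
      next
        case 2
        have "p' \<le> p - 1" "p - 1 \<le> m" using 2 h unfolding Fin_def by auto
        moreover have "\<forall>t. p' \<le> t \<and> t \<le> m \<longrightarrow> x t mod int n \<noteq> x (p'-1) mod int n" using h(2) unfolding Fin_def by blast
        ultimately show ?thesis using h(3) by metis
      qed
    qed
  qed
  show "(\<lambda>p. x (p-1) mod int n) ` {p. Fin p} = {1..<int n}"
  proof (intro equalityI subsetI)
    fix k assume "k \<in> (\<lambda>p. x (p-1) mod int n) ` {p. Fin p}"
    then obtain p where p: "Fin p" "k = x (p-1) mod int n" by auto
    have "\<forall>t. p \<le> t \<and> t \<le> m \<longrightarrow> x t mod int n \<noteq> x (p-1) mod int n" "p \<le> m" using p(1) unfolding Fin_def by blast+
    then have "x m mod int n \<noteq> x (p-1) mod int n" by blast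
    then have "x (p-1) mod int n \<noteq> 0" using xm by simp
    then show "k \<in> {1..<int n}" using p x_mod_range[of "p-1"] by auto
  next
    fix k assume k: "k \<in> {1..<int n}"
    obtain t where t: "t < m" "x t mod int n = k" using visited k by auto
    define S where "S = {t. t \<le> m \<and> x t mod int n = k}"
    have fS: "finite S" unfolding S_def by simp
    have tS: "t \<in> S" unfolding S_def using t by simp
    define t1 where "t1 = Max S"
    have t1S: "t1 \<in> S" unfolding t1_def using fS tS by (intro Max_in) auto
    have t1max: "t' \<in> S \<Longrightarrow> t' \<le> t1" for t' unfolding t1_def using fS by simp
    have t1m: "t1 < m"
    proof -
      have "t1 \<noteq> m" using t1S xm k unfolding S_def by auto
      then show ?thesis using t1S unfolding S_def by simp
    qed
    have "Fin (Suc t1)" unfolding Fin_def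
    proof (intro conjI allI impI)
      show "1 \<le> Suc t1" by simp
      show "Suc t1 \<le> m" using t1m by simp
      fix t' assume t': "Suc t1 \<le> t' \<and> t' \<le> m"
      have "t' \<notin> S" using t' t1max by fastforce
      then show "x t' mod int n \<noteq> x (Suc t1 - 1) mod int n" using t' t1S unfolding S_def by auto
    qed
    moreover have "x (Suc t1 - 1) mod int n = k" using t1S unfolding S_def by simp
    ultimately show "k \<in> (\<lambda>p. x (p-1) mod int n) ` {p. Fin p}" by (intro image_eqI[of _ _ "Suc t1"]) auto
  qed
qed

lemma DF_disj: "\<not> (Desc p \<and> Fin p)"
proof
  assume h: "Desc p \<and> Fin p"
  then have p: "1 \<le> p" "p \<le> m" unfolding Desc_def by auto
  have "x p = x (p-1) + int n" using yD yF h by metis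
  then have "x p mod int n = x (p-1) mod int n" by simp
  then show False using xne[OF p] by simp
qed

lemma part: assumes p: "1 \<le> p" "p \<le> m" shows "Desc p \<or> Fin p"
proof -
  have cD: "card {p. Desc p} = n - 1" using bij_betw_same_card[OF bijD] by simp
  have cF: "card {p. Fin p} = n - 1" using bij_betw_same_card[OF bijF] by simp
  have sub: "{p. Desc p} \<union> {p. Fin p} \<subseteq> {1..m}" unfolding Desc_def Fin_def by auto
  have fin: "finite {p. Desc p}" "finite {p. Fin p}" using sub finite_subset by blast+
  have "card ({p. Desc p} \<union> {p. Fin p}) = card {p. Desc p} + card {p. Fin p}"
    using DF_disj fin by (intro card_Un_disjoint) auto
  also have "\<dots> = card {1..m}" using cD cF n2 by simp
  finally have "{p. Desc p} \<union> {p. Fin p} = {1..m}" using sub by (intro card_subset_eq) auto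
  then show ?thesis using p by auto
qed

end

context fsetup begin
lemma dep:
  assumes i: "1 \<le> i" "i < i'" "i' \<le> m" and c: "x (i-1) mod int n = x (i'-1) mod int n"
    and later: "x (i-1) mod int n = 0 \<or> (\<exists>i''. i' < i'' \<and> i'' \<le> m \<and> x (i''-1) mod int n = x (i-1) mod int n)"
    and di: "x i - x (i-1) < int n" and di': "x i' - x (i'-1) < int n"
  shows "x i - x (i-1) < x i' - x (i'-1)"
proof -
  define K where "K = modn n (x (i-1))"
  define Q where "Q = (\<lambda>e. modn n (a (e-1)) = K)"
  define h where "h = (\<lambda>e. modn n (b e))"
  define g where "g = (\<lambda>e. (x e - x (e-1)) mod int n)"
  define L where "L = filter Q [1..<2*n-1]"
  have nb: "nbr_list n a b K = map h L" unfolding nbr_list_def L_def Q_def h_def ..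
  have Qx: "Q e \<longleftrightarrow> x (e-1) mod int n = x (i-1) mod int n" if "1 \<le> e" "e \<le> m" for e
  proof -
    have "a (e-1) mod int n = x (e-1) mod int n" using xa[of "e-1"] that by simp
    then show ?thesis unfolding Q_def K_def using modn_eq npos by (metis of_nat_0_less_iff)
  qed
  have inL: "1 \<le> e \<and> e \<le> m \<and> Q e" if "e \<in> set L" for e using that unfolding L_def by auto
  have hK: "(h e - K) mod int n = g e" if "1 \<le> e" "e \<le> m" "Q e" for e
  proof -
    have e1: "x (e-1) mod int n = x (i-1) mod int n" using Qx that by simp
    have "(h e - K) mod int n = (b e - x (i-1)) mod int n"
      unfolding h_def K_def by (rule mod_diff_cong) (simp_all add: modn_mod)
    also have "\<dots> = (b e - a (e-1)) mod int n"
      using e1 xa[of "e-1"] that by (intro mod_diff_cong) simp_all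
    also have "\<dots> = g e" unfolding g_def using dx that by simp
    finally show ?thesis .
  qed
  have hrange: "1 \<le> h e \<and> h e \<le> int n \<and> h e \<noteq> K" if "1 \<le> e" "e \<le> m" "Q e" for e
  proof -
    have "h e \<noteq> K"
    proof
      assume "h e = K"
      then have "b e mod int n = a (e-1) mod int n" using that unfolding h_def Q_def using modn_eq npos
        by (metis of_nat_0_less_iff)
      then show False using W1[of e] that by auto
    qed
    then show ?thesis using modn_range npos unfolding h_def by simp
  qed
  have gi: "g i = x i - x (i-1)" unfolding g_def using dpos[of i] i di by (intro mod_pos_pos_trivial) auto
  have gi': "g i' = x i' - x (i'-1)" unfolding g_def using dpos[of i'] i di' by (intro mod_pos_pos_trivial) auto
  have Qi: "Q i" using Qx[of i] i by simp
  have Qi': "Q i'" using Qx[of i'] i c by simp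
  have "g i < g i'"
  proof (cases "x (i-1) mod int n = 0")
    case True
    then have Kn: "K = int n" unfolding K_def modn_def by simp
    have s1: "sorted_wrt (<) (map (\<lambda>c. (c - int n) mod int n) (map h L))"
    proof (rule srt_key)
      show "sorted_wrt (<) (map h L)" using srt nb Kn by simp
      show "\<forall>c\<in>set (map h L). 1 \<le> c \<and> c \<le> int n \<and> c \<noteq> int n"
        using hrange inL Kn by fastforce
    qed
    have meq: "map (\<lambda>c. (c - int n) mod int n) (map h L) = map g L"
      using hK inL Kn by (auto intro!: map_cong)
    have "sorted_wrt (<) (map g L)" using s1 unfolding meq .
    then have "sorted_wrt (<) (map g (filter Q [1..<2*n-1]))" unfolding L_def .
    then show ?thesis by (rule sorted_filter_upt) (use Qi Qi' i in auto)
  next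
    case False
    then obtain i'' where i'': "i' < i''" "i'' \<le> m" "x (i''-1) mod int n = x (i-1) mod int n"
      using later by blast
    have Qi'': "Q i''" using Qx[of i''] i'' i by simp
    have Kr: "K = x (i-1) mod int n" "1 \<le> K" "K < int n"
      using False x_mod_range[of "i-1"] unfolding K_def modn_def by auto
    have s1: "sorted_wrt (<) (map (\<lambda>c. (c - K) mod int n) (butlast (map h L)))"
    proof (rule cyc_key)
      have "K \<in> {1..<int n}" using Kr by simp
      then have "cyc_cond K (nbr_list n a b K)" using cyc by blast
      then show "cyc_cond K (map h L)" unfolding nb .
      show "\<forall>c\<in>set (map h L). 1 \<le> c \<and> c \<le> int n \<and> c \<noteq> K"
        using hrange inL by fastforce
    qed (use Kr in auto)
    obtain rest where rest: "butlast L = filter Q [1..<Suc i'] @ rest"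
      unfolding L_def by (rule exE[OF butlast_filter_prefix[of Q i'' i' "2*n-1" 1]]) (use Qi'' i'' i in auto)
    have "sorted_wrt (<) (map (\<lambda>c. (c - K) mod int n) (map h (filter Q [1..<Suc i'])))"
      using s1 unfolding map_butlast[symmetric] rest by (simp add: sorted_wrt_append)
    moreover have meq2: "map (\<lambda>c. (c - K) mod int n) (map h (filter Q [1..<Suc i'])) = map g (filter Q [1..<Suc i'])"
      unfolding map_map comp_def by (rule map_cong[OF refl]) (use hK i in \<open>auto split: if_splits\<close>)
    ultimately have "sorted_wrt (<) (map g (filter Q [1..<Suc i']))" by (simp only: meq2)
    then show ?thesis by (rule sorted_filter_upt) (use Qi Qi' i in auto)
  qed
  then show ?thesis using gi gi' by simp
qed

end

context fsetup begin

lemma Desc_nz: "Desc p \<Longrightarrow> x p mod int n \<noteq> 0"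
proof -
  assume D: "Desc p"
  have "\<forall>t<p. x t mod int n \<noteq> x p mod int n" "1 \<le> p" using D unfolding Desc_def by blast+
  then have "x 0 mod int n \<noteq> x p mod int n" by simp
  then show ?thesis using x0 by simp
qed

lemma Fin_nz: "Fin p \<Longrightarrow> x (p-1) mod int n \<noteq> 0"
proof -
  assume F: "Fin p"
  have "\<forall>t. p \<le> t \<and> t \<le> m \<longrightarrow> x t mod int n \<noteq> x (p-1) mod int n" "p \<le> m" using F unfolding Fin_def by blast+
  then have "x m mod int n \<noteq> x (p-1) mod int n" by blast
  then show ?thesis using xm by simp
qed

lemma mono1: assumes p: "1 \<le> p" "p < m" shows "y p < y (Suc p)"
proof -
  have p1: "1 \<le> Suc p" "Suc p \<le> m" using p by auto
  have pm: "p \<le> m" using p by simp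
  consider "Desc p" "Desc (Suc p)" | "Desc p" "Fin (Suc p)" | "Fin p" "Fin (Suc p)" | "Fin p" "Desc (Suc p)"
    using part[OF p(1) pm] part[OF p1] by blast
  then show ?thesis
  proof cases
    case 1 then show ?thesis using yD dpos'[of p] p by simp
  next
    case 2 then show ?thesis using yD yF n2 by simp
  next
    case 3 then show ?thesis using yF dpos[of p] p by simp
  next
    case 4
    have nD: "\<not> Desc p" using 4 DF_disj by blast
    then obtain t0 where t0: "t0 < p" "x t0 mod int n = x p mod int n" using p unfolding Desc_def by auto
    define S where "S = {t. t < p \<and> x t mod int n = x p mod int n}"
    have fS: "finite S" unfolding S_def by simp
    have t0S: "t0 \<in> S" unfolding S_def using t0 by simp
    define s where "s = Max S"
    have sS: "s \<in> S" unfolding s_def using fS t0S by (intro Max_in) auto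
    have smax: "t \<in> S \<Longrightarrow> t \<le> s" for t unfolding s_def using fS by simp
    have sp: "s < p" and cs: "x s mod int n = x p mod int n" using sS unfolding S_def by auto
    have nb: "\<forall>t. s < t \<and> t < p \<longrightarrow> x t mod int n \<noteq> x p mod int n"
    proof (intro allI impI)
      fix t assume "s < t \<and> t < p"
      then have "t \<notin> S" using smax by fastforce
      then show "x t mod int n \<noteq> x p mod int n" using \<open>s < t \<and> t < p\<close> unfolding S_def by auto
    qed
    have Ds: "Desc (Suc s)"
    proof -
      have "1 \<le> Suc s" "Suc s \<le> m" using sp p by auto
      then have "Desc (Suc s) \<or> Fin (Suc s)" by (rule part)
      moreover have "\<not> Fin (Suc s)"
      proof
        assume F: "Fin (Suc s)"
        have "\<forall>t. Suc s \<le> t \<and> t \<le> m \<longrightarrow> x t mod int n \<noteq> x (Suc s - 1) mod int n"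
          using F unfolding Fin_def by blast
        then have "x p mod int n \<noteq> x s mod int n" using sp pm by simp
        then show False using cs by simp
      qed
      ultimately show ?thesis by blast
    qed
    have yp1: "y p = x (Suc s) + (x p - x s)" using yrec[OF sp pm cs nb] yD[OF Ds] by simp
    have yp2: "y p = x (p - 1) + int n" using yF 4 by simp
    have later: "x (Suc s - 1) mod int n = 0 \<or> (\<exists>i''. Suc p < i'' \<and> i'' \<le> m \<and> x (i''-1) mod int n = x (Suc s - 1) mod int n)"
    proof (cases "x s mod int n = 0")
      case True then show ?thesis by simp
    next
      case False
      have nF: "\<not> Fin (Suc p)" using 4 DF_disj by blast
      then obtain t where t: "Suc p \<le> t" "t \<le> m" "x t mod int n = x p mod int n"
        using p1 unfolding Fin_def by auto
      have "t \<noteq> m" using t xm False cs by auto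
      then have "Suc p < Suc t" "Suc t \<le> m" "x (Suc t - 1) mod int n = x (Suc s - 1) mod int n"
        using t cs by auto
      then show ?thesis by blast
    qed
    have "x (Suc s) - x (Suc s - 1) < x (Suc p) - x (Suc p - 1)"
    proof (rule dep)
      show "1 \<le> Suc s" "Suc s < Suc p" "Suc p \<le> m" using sp p1 by auto
      show "x (Suc s - 1) mod int n = x (Suc p - 1) mod int n" using cs by simp
      show "x (Suc s) - x (Suc s - 1) < int n" using dD[OF Ds] .
      show "x (Suc p) - x (Suc p - 1) < int n" using dD 4 by blast
    qed (rule later)
    then show ?thesis using yp1 yp2 yD 4 by simp
  qed
qed

lemma ymono: "1 \<le> p \<Longrightarrow> p < q \<Longrightarrow> q \<le> m \<Longrightarrow> y p < y q"
proof (induction q)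
  case 0 then show ?case by simp
next
  case (Suc q)
  show ?case
  proof (cases "p = q")
    case True then show ?thesis using mono1 Suc by simp
  next
    case False
    then have "y p < y q" using Suc by simp
    moreover have "y q < y (Suc q)" using mono1[of q] Suc False by simp
    ultimately show ?thesis by simp
  qed
qed

lemma Desc1: "Desc 1"
  unfolding Desc_def using xne'[of 0] mpos by auto

lemma Fin_m: "Fin m"
proof -
  have "\<not> Desc m" unfolding Desc_def using x0 xm mpos by force
  then show ?thesis using part[of m] mpos by simp
qed

lemma y_low: "1 \<le> p \<Longrightarrow> p \<le> m \<Longrightarrow> x 0 < y p"
proof -
  assume p: "1 \<le> p" "p \<le> m"
  have "y 1 = x 1" using yD Desc1 by simp
  moreover have "x 0 < x 1" using dpos'[of 0] mpos by simp
  moreover have "y 1 \<le> y p" using ymono[of 1 p] p by (cases "p = 1") auto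
  ultimately show ?thesis by simp
qed

lemma y_high: "1 \<le> p \<Longrightarrow> p \<le> m \<Longrightarrow> y p < x 0 + int n * int n"
proof -
  assume p: "1 \<le> p" "p \<le> m"
  have "y m = x (m - 1) + int n" using yF Fin_m by simp
  moreover have "x (m-1) < x m" using dpos[of m] mpos by simp
  moreover have "y p \<le> y m" using ymono[of p m] p by (cases "p = m") auto
  ultimately show ?thesis using xm' by (simp add: algebra_simps)
qed

lemma y_nz: assumes p: "1 \<le> p" "p \<le> m" shows "(y p - x 0) mod int n \<noteq> 0"
proof -
  have e: "(y p - x 0) mod int n = y p mod int n"
  proof -
    obtain t where t: "x 0 = t * int n" using x0 by (metis mult.commute dvd_def dvd_eq_mod_eq_0)
    have "(y p - x 0) mod int n = (y p mod int n - x 0 mod int n) mod int n" by (rule mod_diff_eq[symmetric])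
    also have "\<dots> = y p mod int n" using x0 by simp
    finally show ?thesis .
  qed
  show ?thesis
  proof (cases "Desc p")
    case True then show ?thesis using e yD Desc_nz by simp
  next
    case False
    then have F: "Fin p" using part p by blast
    have "y p mod int n = x (p-1) mod int n" using yF[OF F] by simp
    then show ?thesis using e Fin_nz[OF F] by simp
  qed
qed

lemma rho: assumes p: "1 \<le> p" "p \<le> m"
  shows "P (p-1) \<circ> rs ! (p-1) \<circ> inv (P (p-1)) = refl_aff n 0 (y p - x 0)"
proof -
  have "P (p-1) \<circ> rs ! (p-1) \<circ> inv (P (p-1)) = refl_aff n (P (p-1) (x (p-1))) (P (p-1) (x p))"
    unfolding rdef[OF p] by (rule conj_refl[OF Pper npos[unfolded of_nat_0_less_iff] xne[OF p]])
  also have "\<dots> = refl_aff n (x 0) (y p)" using chain[of "p-1"] p unfolding y_def by simp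
  also have "\<dots> = refl_aff n 0 (y p - x 0)"
  proof -
    obtain t where t: "x 0 = t * int n" using x0 by (metis mult.commute dvd_def dvd_eq_mod_eq_0)
    show ?thesis using refl_aff_shift[of n 0 t "y p - x 0"] t by simp
  qed
  finally show ?thesis .
qed

end

lemma zeta_mono: "n \<ge> 2 \<Longrightarrow> i \<le> i' \<Longrightarrow> zeta n i \<le> zeta n i'"
  unfolding zeta_def by (simp add: add_mono zdiv_mono1)

lemma iota_strict:
  assumes n: "n \<ge> 2" and f: "f mod int n \<noteq> 0" "f' mod int n \<noteq> 0" "f < f'"
  shows "iota n f < iota n f'"
proof (rule ccontr)
  assume "\<not> iota n f < iota n f'"
  then have "zeta n (iota n f') \<le> zeta n (iota n f)" using zeta_mono[OF n] by simp
  then show False using iota_zeta_basic[OF n f(1)] iota_zeta_basic[OF n f(2)] f(3) by simp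
qed

lemma iota_range:
  assumes n: "n \<ge> 2" and f: "f mod int n \<noteq> 0" "1 \<le> f" "f \<le> int n * int n - 1"
  shows "1 \<le> iota n f \<and> iota n f \<le> int n * (int n - 1)"
proof
  show "1 \<le> iota n f"
  proof (rule ccontr)
    assume "\<not> 1 \<le> iota n f"
    then have "zeta n (iota n f) \<le> zeta n 0" using zeta_mono[OF n] by simp
    moreover have "(-1) div (int n - 1) = -1" using n by (simp add: div_eq_minus1)
    ultimately have "f \<le> -1" using iota_zeta_basic[OF n f(1)] unfolding zeta_def by simp
    then show False using f by simp
  qed
  show "iota n f \<le> int n * (int n - 1)"
  proof (rule ccontr)
    assume "\<not> iota n f \<le> int n * (int n - 1)"
    then have "zeta n (int n * (int n - 1) + 1) \<le> zeta n (iota n f)" using zeta_mono[OF n] by simp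
    moreover have "(int n * (int n - 1)) div (int n - 1) = int n" using n by simp
    ultimately have "int n * (int n - 1) + 1 + int n \<le> f" using iota_zeta_basic[OF n f(1)] unfolding zeta_def by simp
    then show False using f by (simp add: algebra_simps)
  qed
qed

lemma conj_transfer:
  assumes P: "bij P" and W: "bij W" and e: "W = P \<circ> U"
  shows "U \<circ> s \<circ> inv U = inv P \<circ> (W \<circ> s \<circ> inv W) \<circ> P"
proof -
  have U: "U = inv P \<circ> W"
    using e P by (simp add: comp_assoc[symmetric] bij_is_inj inv_o_cancel)
  have bU: "bij U" unfolding U using P W by (simp add: bij_comp bij_imp_bij_inv)
  have iU: "inv U = inv W \<circ> P"
    unfolding U using P W by (simp add: o_inv_distrib bij_imp_bij_inv inv_inv_eq)
  show ?thesis unfolding iU unfolding U by (simp add: comp_assoc)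
qed

context fsetup begin

definition f where "f p = y p - x 0"
definition jj where "jj p = nat (iota n (f p))"
abbreviation "NN \<equiv> n * (n - 1)"
definition J where "J = jj ` {1..m}"
definition u where "u = map (\<lambda>j. if j \<in> J then id else sigma n j) [1..<NN+1]"
definition pp where "pp j = prod_perms (take j u)"
definition cnt where "cnt j = card {p \<in> {1..m}. jj p \<le> j}"

lemma f_props: "1 \<le> p \<Longrightarrow> p \<le> m \<Longrightarrow> f p mod int n \<noteq> 0 \<and> 1 \<le> f p \<and> f p \<le> int n * int n - 1"
  unfolding f_def using y_nz y_low y_high by fastforce

lemma jj_props: assumes p: "1 \<le> p" "p \<le> m"
  shows "1 \<le> jj p" "jj p \<le> NN" "int (jj p) = iota n (f p)" "zeta n (int (jj p)) = f p"
proof -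
  have r: "1 \<le> iota n (f p) \<and> iota n (f p) \<le> int n * (int n - 1)"
    using iota_range[OF n2] f_props[OF p] by blast
  show i: "int (jj p) = iota n (f p)" unfolding jj_def using r by simp
  show "1 \<le> jj p" using r i by simp
  have "int n * (int n - 1) = int NN" using n2 by (simp add: of_nat_diff)
  then show "jj p \<le> NN" using r i by linarith
  show "zeta n (int (jj p)) = f p" using i iota_zeta_basic[OF n2] f_props[OF p] by simp
qed

lemma jj_mono: "1 \<le> p \<Longrightarrow> p < q \<Longrightarrow> q \<le> m \<Longrightarrow> jj p < jj q"
proof -
  assume pq: "1 \<le> p" "p < q" "q \<le> m"
  have "f p < f q" unfolding f_def using ymono pq by simp
  then have "iota n (f p) < iota n (f q)"
    using iota_strict[OF n2] f_props pq by simp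
  then show ?thesis using jj_props(3)[of p] jj_props(3)[of q] pq by simp
qed

lemma jj_le_iff: "1 \<le> p \<Longrightarrow> p \<le> m \<Longrightarrow> 1 \<le> q \<Longrightarrow> q \<le> m \<Longrightarrow> jj q \<le> jj p \<longleftrightarrow> q \<le> p"
proof -
  assume h: "1 \<le> p" "p \<le> m" "1 \<le> q" "q \<le> m"
  show ?thesis
  proof
    assume a: "jj q \<le> jj p"
    show "q \<le> p"
    proof (rule ccontr)
      assume "\<not> q \<le> p"
      then have "jj p < jj q" using jj_mono h by simp
      then show False using a by simp
    qed
  next
    assume a: "q \<le> p"
    show "jj q \<le> jj p"
    proof (cases "q = p")
      case True then show ?thesis by simp
    next
      case False then show ?thesis using jj_mono[of q p] a h by simp
    qed
  qed
qed

lemma cnt_at: assumes p: "1 \<le> p" "p \<le> m"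
  shows "cnt (jj p) = p" "cnt (jj p - 1) = p - 1"
proof -
  have "{q \<in> {1..m}. jj q \<le> jj p} = {1..p}" using jj_le_iff[OF p] p by auto
  then show "cnt (jj p) = p" unfolding cnt_def by simp
  have "{q \<in> {1..m}. jj q \<le> jj p - 1} = {1..<p}"
  proof -
    have "jj q \<le> jj p - 1 \<longleftrightarrow> q < p" if "1 \<le> q" "q \<le> m" for q
      using jj_le_iff[OF p that] jj_le_iff[OF that p] jj_props(1)[OF p] by fastforce
    then show ?thesis using p by auto
  qed
  then show "cnt (jj p - 1) = p - 1" unfolding cnt_def by simp
qed

lemma cnt_skip: "Suc j \<notin> J \<Longrightarrow> cnt (Suc j) = cnt j"
proof -
  assume "Suc j \<notin> J"
  then have "jj q \<noteq> Suc j" if "q \<in> {1..m}" for q using that unfolding J_def by (metis image_eqI)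
  then have "{q \<in> {1..m}. jj q \<le> Suc j} = {q \<in> {1..m}. jj q \<le> j}" by (auto simp: le_Suc_eq)
  then show ?thesis unfolding cnt_def by simp
qed

lemma cnt_0: "cnt 0 = 0"
proof -
  have "{q \<in> {1..m}. jj q \<le> 0} = {}" using jj_props(1) by fastforce
  then show ?thesis unfolding cnt_def by simp
qed

lemma cnt_N: "cnt NN = m"
proof -
  have "{q \<in> {1..m}. jj q \<le> NN} = {1..m}" using jj_props(2) by auto
  then show ?thesis unfolding cnt_def by simp
qed

lemma u_len: "length u = NN" unfolding u_def by (simp del: upt_Suc)

lemma u_nth: "j < NN \<Longrightarrow> u ! j = (if Suc j \<in> J then id else sigma n (Suc j))"
  unfolding u_def by (simp del: upt_Suc)

lemma sigma_ne_id: "sigma n j \<noteq> id"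
proof
  assume h: "sigma n j = id"
  define r where "r = (j - 1) mod n"
  have "r < n" unfolding r_def using n2 by simp
  have "sigma n j (int r) = int r + 1" unfolding sigma_def simple_refl_def r_def[symmetric] refl_aff_def by simp
  then show False using h by simp
qed

lemma pp_Suc: "j < NN \<Longrightarrow> pp (Suc j) = pp j \<circ> (if Suc j \<in> J then id else sigma n (Suc j))"
  unfolding pp_def using u_len u_nth by (simp add: take_Suc_conv_app_nth)

lemma bijP: "bij (P t)" using Pper per_def by blast
lemma bijW: "bij (Wf n j)" using Wf_per[OF n2] per_def by blast

lemma claim: "j \<le> NN \<Longrightarrow> Wf n j = P (cnt j) \<circ> pp j"
proof (induction j)
  case 0 then show ?case by (simp add: Wf_def cnt_0 P0 pp_def)
next
  case (Suc j)
  then have jN: "j < NN" by simp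
  have IH: "Wf n j = P (cnt j) \<circ> pp j" by (rule Suc.IH) (use jN in simp)
  show ?case
  proof (cases "Suc j \<in> J")
    case False
    have "pp (Suc j) = pp j \<circ> sigma n (Suc j)" using pp_Suc[OF jN] False by simp
    then show ?thesis unfolding Wf_Suc IH cnt_skip[OF False] by (simp only: comp_assoc)
  next
    case True
    then obtain p0 where p0: "1 \<le> p0" "p0 \<le> m" "Suc j = jj p0" unfolding J_def by auto
    have "j = jj p0 - 1" using p0(3) by simp
    then have c1: "cnt j = p0 - 1" using cnt_at(2)[OF p0(1,2)] by simp
    have c2: "cnt (Suc j) = p0" using cnt_at(1)[OF p0(1,2)] p0(3) by simp
    have pp1: "pp (Suc j) = pp j" using pp_Suc[OF jN] True by simp
    have tau: "Wf n j \<circ> sigma n (Suc j) \<circ> inv (Wf n j) = refl_aff n 0 (f p0)"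
    proof -
      have t1: "Wf n j \<circ> sigma n (Suc j) \<circ> inv (Wf n j) = refl_aff n 0 (zeta n (int (Suc j)))"
        using tau_formula[OF n2, of "Suc j"] by (simp del: of_nat_Suc)
      have t2: "zeta n (int (Suc j)) = f p0" using jj_props(4)[OF p0(1,2)] p0(3) by (simp del: of_nat_Suc)
      show ?thesis using t1 t2 by simp
    qed
    have "Wf n (Suc j) = (Wf n j \<circ> sigma n (Suc j) \<circ> inv (Wf n j)) \<circ> Wf n j"
      using bijW[of j] by (simp add: Wf_Suc comp_assoc bij_is_inj inv_o_cancel)
    also have "\<dots> = refl_aff n 0 (f p0) \<circ> Wf n j" by (simp only: tau)
    also have "\<dots> = (P (p0-1) \<circ> rs ! (p0-1) \<circ> inv (P (p0-1))) \<circ> (P (p0-1) \<circ> pp j)"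
      unfolding f_def rho[OF p0(1,2), symmetric] IH c1 ..
    also have "\<dots> = P (p0-1) \<circ> rs ! (p0-1) \<circ> pp j"
      using bijP[of "p0-1"] by (simp add: fun_eq_iff bij_is_inj inv_f_f)
    also have "\<dots> = P p0 \<circ> pp j" using PSuc[of "p0-1"] p0 by simp
    finally show ?thesis using c2 pp1 by simp
  qed
qed

lemma ppN: "pp NN = id"
proof -
  have eq: "lambda_aff n = lambda_aff n \<circ> pp NN" using claim[of NN] cnt_N Pm Wf_full[OF n2] by simp
  have inj: "inj (lambda_aff n)" using bijP[of m] Pm bij_is_inj by metis
  show ?thesis
  proof (rule ext)
    fix z
    have "lambda_aff n (pp NN z) = lambda_aff n z" using eq by (metis comp_apply)
    then show "pp NN z = id z" using inj by (simp add: inj_eq)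
  qed
qed

end

context fsetup begin

lemma invt: assumes p: "1 \<le> p" "p \<le> m" shows "inv_t n u (jj p) = rs ! (p-1)"
proof -
  let ?j = "jj p - 1"
  have jN: "?j \<le> NN" using jj_props(2)[OF p] by simp
  have e: "Wf n ?j = P (p-1) \<circ> pp ?j" using claim[OF jN] cnt_at(2)[OF p] by simp
  have "inv_t n u (jj p) = pp ?j \<circ> sigma n (jj p) \<circ> inv (pp ?j)"
    unfolding inv_t_def prefix_prod_def pp_def ..
  also have "\<dots> = inv (P (p-1)) \<circ> (Wf n ?j \<circ> sigma n (jj p) \<circ> inv (Wf n ?j)) \<circ> P (p-1)"
    by (rule conj_transfer[OF bijP bijW e])
  also have "Wf n ?j \<circ> sigma n (jj p) \<circ> inv (Wf n ?j) = refl_aff n 0 (f p)"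
    using tau_formula[OF n2, of "jj p"] jj_props(1,4)[OF p] by simp
  also have "refl_aff n 0 (f p) = P (p-1) \<circ> rs ! (p-1) \<circ> inv (P (p-1))"
    using rho[OF p] unfolding f_def by simp
  finally show ?thesis
    using bijP[of "p-1"] by (simp add: fun_eq_iff bij_is_inj inv_f_f)
qed

lemma sw: "sorted_wrt (<) (map jj [1..<m+1])"
  unfolding sorted_wrt_map
  by (rule sorted_wrt_mono_rel[OF _ sorted_wrt_upt]) (use jj_mono in auto)

lemma J_sub: "J \<subseteq> {1..NN}" unfolding J_def using jj_props(1,2) by auto

lemma skips_eq: "skips n u = map jj [1..<m+1]"
proof -
  have "skips n u = filter (\<lambda>j. j \<in> J) [1..<NN+1]"
    unfolding skips_def
  proof (rule filter_cong[OF refl])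
    fix j assume "j \<in> set [1..<NN+1]"
    then have j: "1 \<le> j" "j - 1 < NN" by auto
    have "u ! (j-1) = (if j \<in> J then id else sigma n j)" using u_nth[OF j(2)] j(1) by simp
    then show "(u ! (j-1) = id) = (j \<in> J)" using sigma_ne_id by simp
  qed
  also have "\<dots> = map jj [1..<m+1]"
  proof (rule sorted_distinct_set_unique)
    show "sorted (filter (\<lambda>j. j \<in> J) [1..<NN+1])" by (rule sorted_wrt_filter) (simp del: upt_Suc)
    show "distinct (filter (\<lambda>j. j \<in> J) [1..<NN+1])" by simp
    show "sorted (map jj [1..<m+1])" "distinct (map jj [1..<m+1])"
      using sw strict_sorted_iff by blast+
    have "set (filter (\<lambda>j. j \<in> J) [1..<NN+1]) = J" using J_sub n2 by (auto simp del: upt_Suc)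
    moreover have "set (map jj [1..<m+1]) = J" unfolding J_def by auto
    ultimately show "set (filter (\<lambda>j. j \<in> J) [1..<NN+1]) = set (map jj [1..<m+1])" by simp
  qed
  finally show ?thesis .
qed

lemma main: "\<exists>v \<in> subwords_S n. rs = r_of n v"
proof (rule bexI[of _ u])
  show "u \<in> subwords_S n" unfolding subwords_S_def
  proof (intro CollectI conjI ballI)
    show "length u = n * (n - 1)" using u_len .
    fix j assume "j \<in> {1..n * (n - 1)}"
    then have j: "1 \<le> j" "j - 1 < NN" by auto
    show "u ! (j-1) = sigma n j \<or> u ! (j-1) = id" using u_nth[OF j(2)] j(1) by simp
  next
    show "length (skips n u) = 2 * n - 2" unfolding skips_eq by (simp del: upt_Suc)
    show "prod_perms u = id" using ppN u_len unfolding pp_def by simp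
  qed
  have "r_of n u = map (inv_t n u) (map jj [1..<m+1])" unfolding r_of_def skips_eq ..
  also have "\<dots> = map (\<lambda>p. rs ! (p-1)) [1..<m+1]" using invt by (auto intro!: map_cong)
  also have "\<dots> = map (\<lambda>i. rs ! i) [0..<m]"
  proof -
    have "[1..<m+1] = map Suc [0..<m]" by (simp add: map_Suc_upt)
    then show ?thesis by simp
  qed
  also have "\<dots> = rs" using len map_nth[of rs] by simp
  finally show "rs = r_of n u" by simp
qed

end

theorem proposition5p18:
  fixes n :: nat and rs :: "(int \<Rightarrow> int) list"
  assumes "n \<ge> 2"
    and "rs \<in> fact_lambda n"
    and "cyclic_fact n rs"
  shows "\<exists>u \<in> subwords_S n. rs = r_of n u"
proof -
  obtain a b where ab: "tree_like_wit n rs a b" "sorted_wrt (<) (nbr_list n a b (int n))"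
    "\<forall>k\<in>{1..<int n}. cyc_cond k (nbr_list n a b k)"
    using assms(3) unfolding cyclic_fact_def by blast
  have pr: "prod_perms rs = lambda_aff n" using assms(2) unfolding fact_lambda_def by blast
  interpret fsetup n rs a b using assms(1) ab pr by unfold_locales
  show ?thesis using main .
qed

end
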